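(* Assume $\mathbf a,\mathbf b\in\Delta^n$ with strictly positive entries. Then the problem $\min_{X\in\mathbb{R}^{n\times n}_+}f(X)$ admits an optimal solution $X_f$ such that $$\|X_f\mathbf 1_n-\mathbf a\|_1+\|X_f^\top\mathbf 1_n-\mathbf b\|_1\le\frac{2n\|C\|_\infty}{\tau}.$$
   Context: Let $n\ge1$, $C\in\mathbb{R}^{n\times n}$ with nonnegative entries and $\|C\|_\infty=\max_{i,j}|C_{ij}|$; $\tau>0$; $\Delta^n=\{\mathbf x\in\mathbb{R}^n_+:\sum_i x_i=1\}$. For $\mathbf x\in\mathbb{R}^n_+$ and $\mathbf y$ with positive entries, $\mathbf{KL}(\mathbf x\|\mathbf y)=\sum_i x_i\log(x_i/y_i)-x_i+y_i$ (with $0\log0=0$). $\mathbf 1_n$ is the all-ones vector. $f(X)=\langle C,X\rangle+\tau\mathbf{KL}(X\mathbf 1_n\|\mathbf a)+\tau\mathbf{KL}(X^\top\mathbf 1_n\|\mathbf b)$ for $X\in\mathbb{R}^{n\times n}_+$. *)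

theory Defs
  imports "HOL-Analysis.Analysis"
begin

definition KL :: "real^'n \<Rightarrow> real^'n \<Rightarrow> real" where
  "KL x y = (\<Sum>i\<in>UNIV. (if x$i = 0 then 0 else x$i * ln (x$i / y$i)) - x$i + y$i)"

definition ones :: "real^'n" where "ones = (\<chi> i. 1)"

definition nonneg_mat :: "real^'n^'m \<Rightarrow> bool" where
  "nonneg_mat X \<longleftrightarrow> (\<forall>i j. X$i$j \<ge> 0)"

definition in_simplex :: "real^'n \<Rightarrow> bool" where
  "in_simplex x \<longleftrightarrow> (\<forall>i. x$i \<ge> 0) \<and> (\<Sum>i\<in>UNIV. x$i) = 1"

definition frob :: "real^'n^'m \<Rightarrow> real^'n^'m \<Rightarrow> real" where
  "frob C X = (\<Sum>i\<in>UNIV. \<Sum>j\<in>UNIV. C$i$j * X$i$j)"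

definition max_norm :: "real^'n^'m \<Rightarrow> real" where
  "max_norm C = Max {\<bar>C$i$j\<bar> | i j. True}"

definition l1 :: "real^'n \<Rightarrow> real" where
  "l1 x = (\<Sum>i\<in>UNIV. \<bar>x$i\<bar>)"

definition UOT_obj :: "real^'n^'n \<Rightarrow> real \<Rightarrow> real^'n \<Rightarrow> real^'n \<Rightarrow> real^'n^'n \<Rightarrow> real" where
  "UOT_obj C \<tau> a b X = frob C X + \<tau> * KL (X *v ones) a + \<tau> * KL (transpose X *v ones) b"

end

theory Submission imports Defs "HOL-Real_Asymp.Real_Asymp" begin


definition phi :: "real \<Rightarrow> real \<Rightarrow> real" where
  "phi y x = (if x = 0 then 0 else x * ln (x / y)) - x + y"

definition rs :: "real^'n^'m \<Rightarrow> 'm \<Rightarrow> real" where "rs X i = (\<Sum>j\<in>UNIV. X$i$j)"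
definition cs :: "real^'n^'m \<Rightarrow> 'n \<Rightarrow> real" where "cs X j = (\<Sum>i\<in>UNIV. X$i$j)"

lemma KL_phi: "KL x y = (\<Sum>i\<in>UNIV. phi (y$i) (x$i))"
  by (simp add: KL_def phi_def)

lemma rowsum: "(X *v ones)$i = rs X i"
  by (simp add: matrix_vector_mult_def ones_def rs_def)

lemma colsum: "(transpose X *v ones)$j = cs X j"
  by (simp add: matrix_vector_mult_def ones_def cs_def transpose_def)

lemma rs_transpose: "rs (transpose X) j = cs X j"
  by (simp add: rs_def cs_def transpose_def)

lemma obj_eq: "UOT_obj C \<tau> a b X = frob C X + \<tau>*(\<Sum>i\<in>UNIV. phi (a$i) (rs X i)) + \<tau>*(\<Sum>j\<in>UNIV. phi (b$j) (cs X j))"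
  unfolding UOT_obj_def KL_phi rowsum rs_transpose ..

lemma phi_tangent:
  assumes "y > 0" "z > 0" "x \<ge> 0"
  shows "phi y x \<ge> phi y z + ln (z/y) * (x - z)"
proof (cases "x = 0")
  case True
  then show ?thesis using assms by (simp add: phi_def algebra_simps)
next
  case False
  hence x: "x > 0" using assms by simp
  have l: "ln (z/x) \<le> z/x - 1" using ln_le_minus_one[of "z/x"] x assms by simp
  have "ln (x/y) - ln (z/y) = - ln (z/x)" using x assms by (simp add: ln_div)
  have "x * ln (x/y) - x * ln (z/y) = x * (ln (x/y) - ln (z/y))" by (simp add: right_diff_distrib)
  also have "\<dots> = - x * ln (z/x)" using \<open>ln (x/y) - ln (z/y) = - ln (z/x)\<close> by simp
  also have "\<dots> \<ge> x - z"
  proof -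
    have "x * ln (z/x) \<le> x * (z/x - 1)" using mult_left_mono[OF l, of x] x by simp
    also have "\<dots> = z - x" using x by (simp add: right_diff_distrib)
    finally show ?thesis by simp
  qed
  finally show ?thesis using x assms by (simp add: phi_def algebra_simps)
qed

lemma phi_eq: "phi y = (\<lambda>x. x * ln (x / y) - x + y)"
  by (rule ext) (simp add: phi_def)

lemma phi_cont: assumes "y > 0" shows "continuous_on {0..} (phi y)"
proof -
  have t: "((\<lambda>x. x * ln (x / y)) \<longlongrightarrow> 0) (at_right 0)" using assms by real_asymp
  have "continuous_on {0..} (\<lambda>x. x * ln (x / y))"
    unfolding continuous_on_eq_continuous_within
  proof
    fix x :: real assume x: "x \<in> {0..}"
    show "continuous (at x within {0..}) (\<lambda>x. x * ln (x / y))"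
    proof (cases "x = 0")
      case True
      then show ?thesis using t unfolding continuous_within by (simp add: at_within_Ici_at_right)
    next
      case False
      hence "x > 0" using x by simp
      hence "isCont (\<lambda>x. x * ln (x / y)) x" using assms by (intro continuous_intros) auto
      then show ?thesis by (rule continuous_at_imp_continuous_at_within)
    qed
  qed
  then show ?thesis unfolding phi_eq by (rule continuous_on_add[OF continuous_on_diff[OF _ continuous_on_id] continuous_on_const])
qed

definition E :: "'n \<Rightarrow> 'n \<Rightarrow> real^'n^'n" where
  "E i j = (\<chi> k l. if k = i \<and> l = j then 1 else 0)"

lemma rs_pert: "rs (X + t *\<^sub>R E i j) k = rs X k + (if k = i then t else 0)"
  by (cases "k = i") (simp_all add: rs_def E_def sum.distrib sum_distrib_left[symmetric])

lemma cs_pert: "cs (X + t *\<^sub>R E i j) l = cs X l + (if l = j then t else 0)"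
  by (cases "l = j") (simp_all add: cs_def E_def sum.distrib sum_distrib_left[symmetric])

lemma dbl_delta: "(\<Sum>k\<in>(UNIV::'n::finite set). \<Sum>l\<in>(UNIV::'m::finite set). if k = i \<and> l = j then x else 0) = (x::real)"
proof -
  have "\<And>k. (\<Sum>l\<in>(UNIV::'m set). if k = i \<and> l = j then x else 0) = (if k = i then x else 0)"
    by (case_tac "k = i") auto
  then show ?thesis by simp
qed

lemma frob_pert: "frob C (X + t *\<^sub>R E i j) = frob C X + t * C$i$j"
proof -
  have "frob C (X + t *\<^sub>R E i j) = (\<Sum>k\<in>UNIV. \<Sum>l\<in>UNIV. C$k$l * X$k$l + (if k = i \<and> l = j then t * C$i$j else 0))"
    unfolding frob_def by (intro sum.cong refl) (auto simp: E_def algebra_simps)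
  also have "\<dots> = frob C X + t * C$i$j"
    by (simp only: sum.distrib frob_def dbl_delta)
  finally show ?thesis .
qed

lemma sum_upd:
  fixes g :: "'n::finite \<Rightarrow> real \<Rightarrow> real"
  shows "(\<Sum>k\<in>UNIV. g k (w k + (if k = i then t else 0))) = (\<Sum>k\<in>UNIV. g k (w k)) + (g i (w i + t) - g i (w i))"
proof -
  have "(\<Sum>k\<in>UNIV. g k (w k + (if k = i then t else 0))) = (\<Sum>k\<in>UNIV. g k (w k) + (if k = i then g i (w i + t) - g i (w i) else 0))"
    by (rule sum.cong) auto
  then show ?thesis by (simp add: sum.distrib)
qed

lemma obj_pert: "UOT_obj C \<tau> a b (X + t *\<^sub>R E i j) = UOT_obj C \<tau> a b X + t * C$i$j
   + \<tau> * (phi (a$i) (rs X i + t) - phi (a$i) (rs X i)) + \<tau> * (phi (b$j) (cs X j + t) - phi (b$j) (cs X j))"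
  unfolding obj_eq frob_pert rs_pert cs_pert sum_upd[of "\<lambda>k. phi (a$k)" "rs X" i t] sum_upd[of "\<lambda>k. phi (b$k)" "cs X" j t]
  by (simp add: algebra_simps)

lemma nonneg_pert: "nonneg_mat X \<Longrightarrow> t \<ge> - X$i$j \<Longrightarrow> nonneg_mat (X + t *\<^sub>R E i j)"
  unfolding nonneg_mat_def E_def by auto

lemma phi_inc: "a > 0 \<Longrightarrow> r \<ge> 0 \<Longrightarrow> t > 0 \<Longrightarrow> phi a (r + t) - phi a r \<le> t * ln ((r+t)/a)"
  using phi_tangent[of a "r+t" r] by (simp add: algebra_simps)

lemma phi_dec: "a > 0 \<Longrightarrow> r > t \<Longrightarrow> t > 0 \<Longrightarrow> phi a (r + - t) - phi a r \<le> - t * ln ((r-t)/a)"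
  using phi_tangent[of a "r-t" r] by (simp add: algebra_simps)

lemma ln_up: "r > 0 \<Longrightarrow> a > 0 \<Longrightarrow> t \<ge> 0 \<Longrightarrow> ln ((r+t)/a) \<le> ln (r/a) + t/(r::real)"
proof -
  assume h: "r > 0" "a > 0" "t \<ge> 0"
  have "r + t > 0" using h by simp
  have "ln ((r+t)/a) - ln (r/a) = ln ((r+t)/r)" using h \<open>r+t>0\<close> by (simp add: ln_div)
  also have "\<dots> \<le> (r+t)/r - 1" using ln_le_minus_one h by simp
  also have "\<dots> = t/r" using h by (simp add: field_simps)
  finally show ?thesis by simp
qed

lemma ln_down: "r > 0 \<Longrightarrow> a > 0 \<Longrightarrow> t > 0 \<Longrightarrow> 2*t \<le> r \<Longrightarrow> ln ((r-t)/a) \<ge> ln (r/a) - 2*t/(r::real)"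
proof -
  assume h: "r > 0" "a > 0" "t > 0" "2*t \<le> r"
  have "r - t > 0" using h by simp
  have "ln (r/a) - ln ((r-t)/a) = ln (r/(r-t))" using h \<open>r-t>0\<close> by (simp add: ln_div)
  also have "\<dots> \<le> r/(r-t) - 1" using ln_le_minus_one h by simp
  also have "\<dots> = t/(r-t)" using h by (simp add: field_simps)
  also have "\<dots> \<le> 2*t/r" using h by (simp add: field_simps)
  finally show ?thesis by simp
qed

lemma lim_ge: "(\<And>t. t > 0 \<Longrightarrow> 0 \<le> A + B*t) \<Longrightarrow> B \<ge> 0 \<Longrightarrow> 0 \<le> (A::real)"
proof (rule ccontr)
  assume h: "\<And>t. t > 0 \<Longrightarrow> 0 \<le> A + B*t" "B \<ge> 0" "\<not> 0 \<le> A"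
  have "0 \<le> A + B * (-A/(B+1))" using h by (intro h(1)) (simp add: field_simps)
  moreover have "A + B * (-A/(B+1)) = A/(B+1)" using h by (simp add: field_simps)
  moreover have "A/(B+1) < 0" using h by (simp add: divide_neg_pos)
  ultimately show False by simp
qed

lemma lim_le: "d > 0 \<Longrightarrow> (\<And>t. t > 0 \<Longrightarrow> t < d \<Longrightarrow> A \<le> B*t) \<Longrightarrow> B \<ge> 0 \<Longrightarrow> (A::real) \<le> 0"
proof (rule ccontr)
  assume h: "d > 0" "\<And>t. t > 0 \<Longrightarrow> t < d \<Longrightarrow> A \<le> B*t" "B \<ge> 0" "\<not> A \<le> 0"
  define t where "t = min (d/2) (A/(2*(B+1)))"
  have t: "t > 0" "t < d" "t \<le> A/(2*(B+1))" using h by (auto simp: t_def)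
  have "B * t \<le> B * (A/(2*(B+1)))" using mult_left_mono[OF t(3) h(3)] .
  also have "\<dots> < A"
  proof -
    have A: "A > 0" using h by simp
    have "B/(2*(B+1)) < 1" using h(3) by (simp add: field_simps)
    hence "A * (B/(2*(B+1))) < A * 1" using A by (intro mult_strict_left_mono) auto
    thus ?thesis by (simp add: mult.commute)
  qed
  finally show False using h(2)[OF t(1,2)] by simp
qed

lemma key_neg:
  assumes "\<tau> > 0" "a > 0" "b > 0" "c \<ge> 0"
  shows "\<exists>t>0. C0 + \<tau> * ln (t/a) + \<tau> * ln ((c+t)/b) < (0::real)"
proof -
  define L where "L = ln ((c+1)/b)"
  define t where "t = min 1 (a * exp (- (C0/\<tau>) - L - 1))"
  have t: "t > 0" "t \<le> 1" "t \<le> a * exp (- (C0/\<tau>) - L - 1)" using assms by (auto simp: t_def)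
  have "ln (t/a) \<le> ln (exp (- (C0/\<tau>) - L - 1))"
    using t assms by (subst ln_le_cancel_iff) (auto simp: field_simps)
  hence 1: "ln (t/a) \<le> - (C0/\<tau>) - L - 1" by simp
  have 2: "ln ((c+t)/b) \<le> L" unfolding L_def
    using t assms by (subst ln_le_cancel_iff) (auto simp: divide_right_mono)
  have "\<tau> * ln (t/a) + \<tau> * ln ((c+t)/b) \<le> \<tau> * (- (C0/\<tau>) - L - 1) + \<tau> * L"
    using 1 2 assms by (intro add_mono mult_left_mono) auto
  also have "\<dots> = - C0 - \<tau>" using assms by (simp add: field_simps)
  finally show ?thesis using t assms by (intro exI[of _ t]) auto
qed

lemma rs_nonneg: "nonneg_mat X \<Longrightarrow> rs X i \<ge> 0"
  unfolding rs_def nonneg_mat_def by (simp add: sum_nonneg)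
lemma cs_nonneg: "nonneg_mat X \<Longrightarrow> cs X j \<ge> 0"
  unfolding cs_def nonneg_mat_def by (simp add: sum_nonneg)
lemma entry_le_rs: "nonneg_mat X \<Longrightarrow> X$i$j \<le> rs X i"
  unfolding rs_def nonneg_mat_def by (rule member_le_sum) auto
lemma entry_le_cs: "nonneg_mat X \<Longrightarrow> X$i$j \<le> cs X j"
  unfolding cs_def nonneg_mat_def by (rule member_le_sum[where f="\<lambda>i. X$i$j"]) auto

context
  fixes C X :: "real^'n^'n" and a b :: "real^'n" and \<tau> :: real
  assumes tau: "\<tau> > 0" and apos: "\<forall>i. a$i > 0" and bpos: "\<forall>i. b$i > 0"
    and Xnn: "nonneg_mat X"
    and opt: "\<forall>Y. nonneg_mat Y \<longrightarrow> UOT_obj C \<tau> a b X \<le> UOT_obj C \<tau> a b Y"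
begin

lemma G1: "t > 0 \<Longrightarrow> 0 \<le> C$i$j + \<tau> * ln ((rs X i + t)/a$i) + \<tau> * ln ((cs X j + t)/b$j)"
proof -
  assume t: "t > 0"
  have "UOT_obj C \<tau> a b X \<le> UOT_obj C \<tau> a b (X + t *\<^sub>R E i j)"
  proof -
    have "0 \<le> X$i$j" using Xnn unfolding nonneg_mat_def by auto
    hence "nonneg_mat (X + t *\<^sub>R E i j)" using nonneg_pert[OF Xnn, of i j t] t by auto
    thus ?thesis using opt by auto
  qed
  hence 0: "0 \<le> t * C$i$j + \<tau> * (phi (a$i) (rs X i + t) - phi (a$i) (rs X i)) + \<tau> * (phi (b$j) (cs X j + t) - phi (b$j) (cs X j))"
    unfolding obj_pert by simp
  have 1: "\<tau> * (phi (a$i) (rs X i + t) - phi (a$i) (rs X i)) \<le> \<tau> * (t * ln ((rs X i + t)/a$i))"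
    using phi_inc[of "a$i" "rs X i" t] apos rs_nonneg[OF Xnn] t tau by (intro mult_left_mono) auto
  have 2: "\<tau> * (phi (b$j) (cs X j + t) - phi (b$j) (cs X j)) \<le> \<tau> * (t * ln ((cs X j + t)/b$j))"
    using phi_inc[of "b$j" "cs X j" t] bpos cs_nonneg[OF Xnn] t tau by (intro mult_left_mono) auto
  have "0 \<le> t * (C$i$j + \<tau> * ln ((rs X i + t)/a$i) + \<tau> * ln ((cs X j + t)/b$j))"
    using 0 1 2 by (simp add: algebra_simps)
  then show ?thesis using t by (simp add: zero_le_mult_iff)
qed

lemma rpos: "rs X i > 0"
proof (rule ccontr)
  assume "\<not> rs X i > 0"
  hence r0: "rs X i = 0" using rs_nonneg[OF Xnn, of i] by simp
  obtain t where t: "t > 0" "C$i$i + \<tau> * ln (t/a$i) + \<tau> * ln ((cs X i + t)/b$i) < 0"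
    using key_neg[OF tau, of "a$i" "b$i" "cs X i" "C$i$i"] apos bpos cs_nonneg[OF Xnn] by blast
  show False using G1[OF t(1), of i i] t(2) r0 by simp
qed

lemma cpos: "cs X j > 0"
proof (rule ccontr)
  assume "\<not> cs X j > 0"
  hence c0: "cs X j = 0" using cs_nonneg[OF Xnn, of j] by simp
  obtain t where t: "t > 0" "C$j$j + \<tau> * ln (t/b$j) + \<tau> * ln ((rs X j + t)/a$j) < 0"
    using key_neg[OF tau, of "b$j" "a$j" "rs X j" "C$j$j"] apos bpos rs_nonneg[OF Xnn] by blast
  show False using G1[OF t(1), of j j] t(2) c0 by simp
qed

lemma P3: "0 \<le> C$i$j + \<tau> * ln (rs X i/a$i) + \<tau> * ln (cs X j/b$j)"
proof (rule lim_ge)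
  fix t :: real assume t: "t > 0"
  have "0 \<le> C$i$j + \<tau> * ln ((rs X i + t)/a$i) + \<tau> * ln ((cs X j + t)/b$j)" using G1[OF t] .
  also have "\<dots> \<le> C$i$j + \<tau> * (ln (rs X i/a$i) + t / rs X i) + \<tau> * (ln (cs X j/b$j) + t / cs X j)"
    using ln_up[of "rs X i" "a$i" t] ln_up[of "cs X j" "b$j" t] rpos cpos apos bpos t tau
    by (intro add_mono mult_left_mono) auto
  also have "\<dots> = C$i$j + \<tau> * ln (rs X i/a$i) + \<tau> * ln (cs X j/b$j) + (\<tau> * (1 / rs X i + 1 / cs X j)) * t"
    by (simp add: algebra_simps)
  finally show "0 \<le> C$i$j + \<tau> * ln (rs X i/a$i) + \<tau> * ln (cs X j/b$j) + (\<tau> * (1 / rs X i + 1 / cs X j)) * t" .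
next
  show "0 \<le> \<tau> * (1 / rs X i + 1 / cs X j)" using tau rpos[of i] cpos[of j] by simp
qed

lemma P4: "X$i$j > 0 \<Longrightarrow> C$i$j + \<tau> * ln (rs X i/a$i) + \<tau> * ln (cs X j/b$j) \<le> 0"
proof -
  assume xp: "X$i$j > 0"
  show ?thesis
  proof (rule lim_le)
    show "X$i$j/2 > 0" using xp by simp
  next
    show "0 \<le> \<tau> * (2 / rs X i + 2 / cs X j)" using tau rpos[of i] cpos[of j] by simp
  next
    fix t :: real assume t: "t > 0" "t < X$i$j/2"
    have le1: "2*t \<le> rs X i" using entry_le_rs[OF Xnn, of i j] t by simp
    have le2: "2*t \<le> cs X j" using entry_le_cs[OF Xnn, of i j] t by simp
    have "UOT_obj C \<tau> a b X \<le> UOT_obj C \<tau> a b (X + (-t) *\<^sub>R E i j)"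
      using opt nonneg_pert[OF Xnn, of i j "-t"] t by auto
    hence 0: "0 \<le> (-t) * C$i$j + \<tau> * (phi (a$i) (rs X i + -t) - phi (a$i) (rs X i)) + \<tau> * (phi (b$j) (cs X j + -t) - phi (b$j) (cs X j))"
      unfolding obj_pert by simp
    have 1: "\<tau> * (phi (a$i) (rs X i + -t) - phi (a$i) (rs X i)) \<le> \<tau> * (- t * ln ((rs X i - t)/a$i))"
      using phi_dec[of "a$i" t "rs X i"] apos le1 t tau by (intro mult_left_mono) auto
    have 2: "\<tau> * (phi (b$j) (cs X j + -t) - phi (b$j) (cs X j)) \<le> \<tau> * (- t * ln ((cs X j - t)/b$j))"
      using phi_dec[of "b$j" t "cs X j"] bpos le2 t tau by (intro mult_left_mono) auto
    have "0 \<le> - t * (C$i$j + \<tau> * ln ((rs X i - t)/a$i) + \<tau> * ln ((cs X j - t)/b$j))"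
      using 0 1 2 by (simp add: algebra_simps)
    hence 3: "C$i$j + \<tau> * ln ((rs X i - t)/a$i) + \<tau> * ln ((cs X j - t)/b$j) \<le> 0"
      using t by (simp add: mult_le_0_iff)
    have "C$i$j + \<tau> * (ln (rs X i/a$i) - 2*t/rs X i) + \<tau> * (ln (cs X j/b$j) - 2*t/cs X j)
       \<le> C$i$j + \<tau> * ln ((rs X i - t)/a$i) + \<tau> * ln ((cs X j - t)/b$j)"
      using ln_down[of "rs X i" "a$i" t] ln_down[of "cs X j" "b$j" t] rpos cpos apos bpos t tau le1 le2
      by (intro add_mono mult_left_mono) auto
    with 3 show "C$i$j + \<tau> * ln (rs X i/a$i) + \<tau> * ln (cs X j/b$j) \<le> \<tau> * (2 / rs X i + 2 / cs X j) * t"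
      by (simp add: algebra_simps)
  qed
qed

end




lemma max_norm_ge: "\<bar>C$i$j\<bar> \<le> max_norm (C::real^'n^'m)"
proof -
  have e: "{\<bar>C$i$j\<bar> |i j. True} \<subseteq> (\<lambda>p. \<bar>C$(fst p)$(snd p)\<bar>) ` UNIV"
  proof
    fix x assume "x \<in> {\<bar>C$i$j\<bar> |i j. True}"
    then obtain i j where "x = \<bar>C$i$j\<bar>" by blast
    thus "x \<in> (\<lambda>p. \<bar>C$(fst p)$(snd p)\<bar>) ` UNIV" by (intro image_eqI[where x="(i,j)"]) auto
  qed
  have "finite {\<bar>C$i$j\<bar> |i j. True}" by (rule finite_subset[OF e]) simp
  thus ?thesis unfolding max_norm_def by (rule Max_ge) blast
qed

lemma phi_lower: "y > 0 \<Longrightarrow> x \<ge> 0 \<Longrightarrow> phi y x \<ge> x + y - exp 1 * y"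
proof -
  assume h: "y > 0" "x \<ge> 0"
  have "x + y - exp 1 * y = phi y (exp 1 * y) + ln (exp 1 * y / y) * (x - exp 1 * y)"
    using h by (simp add: phi_def algebra_simps)
  also have "\<dots> \<le> phi y x"
    using phi_tangent[of y "exp 1 * y" x] h by simp
  finally show ?thesis .
qed

definition tot :: "real^'n^'m \<Rightarrow> real" where "tot X = (\<Sum>i\<in>UNIV. rs X i)"

lemma tot_cs: "(\<Sum>j\<in>UNIV. cs X j) = tot X"
  unfolding tot_def rs_def cs_def by (rule sum.swap)

lemma obj_lower:
  assumes tau: "\<tau> > 0" and apos: "\<forall>i. a$i > 0" and bpos: "\<forall>i. b$i > 0"
    and sa: "in_simplex a" and sb: "in_simplex b" and Cnn: "nonneg_mat C" and Ynn: "nonneg_mat Y"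
  shows "UOT_obj C \<tau> a b Y \<ge> 2 * \<tau> * (tot Y + 1 - exp 1)"
proof -
  have f: "frob C Y \<ge> 0" using Cnn Ynn unfolding frob_def nonneg_mat_def by (intro sum_nonneg) auto
  have "(\<Sum>i\<in>UNIV. phi (a$i) (rs Y i)) \<ge> (\<Sum>i\<in>UNIV. rs Y i + a$i - exp 1 * a$i)"
    using phi_lower apos rs_nonneg[OF Ynn] by (intro sum_mono) auto
  also have "(\<Sum>i\<in>UNIV. rs Y i + a$i - exp 1 * a$i) = tot Y + 1 - exp 1"
    using sa by (simp add: sum.distrib sum_subtractf tot_def in_simplex_def sum_distrib_left[symmetric])
  finally have 1: "(\<Sum>i\<in>UNIV. phi (a$i) (rs Y i)) \<ge> tot Y + 1 - exp 1" .
  have "(\<Sum>j\<in>UNIV. phi (b$j) (cs Y j)) \<ge> (\<Sum>j\<in>UNIV. cs Y j + b$j - exp 1 * b$j)"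
    using phi_lower bpos cs_nonneg[OF Ynn] by (intro sum_mono) auto
  also have "(\<Sum>j\<in>UNIV. cs Y j + b$j - exp 1 * b$j) = tot Y + 1 - exp 1"
    using sb by (simp add: sum.distrib sum_subtractf tot_cs in_simplex_def sum_distrib_left[symmetric])
  finally have 2: "(\<Sum>j\<in>UNIV. phi (b$j) (cs Y j)) \<ge> tot Y + 1 - exp 1" .
  have "UOT_obj C \<tau> a b Y \<ge> 0 + \<tau> * (tot Y + 1 - exp 1) + \<tau> * (tot Y + 1 - exp 1)"
    unfolding obj_eq using f 1 2 tau by (intro add_mono mult_left_mono) auto
  thus ?thesis by (simp add: algebra_simps)
qed

lemma obj_zero:
  assumes "in_simplex a" "in_simplex b"
  shows "UOT_obj C \<tau> a b 0 = 2 * \<tau>"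
  using assms unfolding obj_eq by (simp add: frob_def rs_def cs_def phi_def in_simplex_def)

lemma exists_min:
  fixes C :: "real^'n^'n" and a b :: "real^'n" and \<tau> :: real
  assumes tau: "\<tau> > 0" and apos: "\<forall>i. a$i > 0" and bpos: "\<forall>i. b$i > 0"
    and sa: "in_simplex a" and sb: "in_simplex b" and Cnn: "nonneg_mat C"
  shows "\<exists>X. nonneg_mat X \<and> (\<forall>Y. nonneg_mat Y \<longrightarrow> UOT_obj C \<tau> a b X \<le> UOT_obj C \<tau> a b Y)"
proof -
  define S where "S = {X :: real^'n^'n. nonneg_mat X \<and> tot X \<le> exp 1}"
  have S_eq: "S = {X. \<forall>i. \<forall>j. 0 \<le> X$i$j} \<inter> {X. (\<Sum>i\<in>UNIV. \<Sum>j\<in>UNIV. X$i$j) \<le> exp 1}"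
    unfolding S_def nonneg_mat_def tot_def rs_def by auto
  have closed: "closed S" unfolding S_eq
  proof (intro closed_Int closed_Collect_all)
    fix i j show "closed {X::real^'n^'n. 0 \<le> X$i$j}"
      by (intro closed_Collect_le continuous_on_const continuous_on_component continuous_on_id)
  next
    show "closed {X::real^'n^'n. (\<Sum>i\<in>UNIV. \<Sum>j\<in>UNIV. X$i$j) \<le> exp 1}"
      by (intro closed_Collect_le continuous_on_const continuous_on_sum continuous_on_component continuous_on_id)
  qed
  have bnd: "bounded S" unfolding bounded_iff
  proof (intro exI ballI)
    fix X assume X: "X \<in> S"
    have "norm X \<le> (\<Sum>i\<in>UNIV. norm (X$i))" unfolding norm_vec_def by (rule L2_set_le_sum) simp
    also have "\<dots> \<le> (\<Sum>i\<in>UNIV. \<Sum>j\<in>UNIV. \<bar>X$i$j\<bar>)" by (intro sum_mono norm_le_l1_cart)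
    also have "\<dots> = tot X" using X unfolding S_def nonneg_mat_def tot_def rs_def by simp
    also have "\<dots> \<le> exp 1" using X unfolding S_def by simp
    finally show "norm X \<le> exp 1" .
  qed
  have comp: "compact S" using closed bnd by (simp add: compact_eq_bounded_closed)
  have zS: "0 \<in> S" unfolding S_def nonneg_mat_def tot_def rs_def by simp
  have rsc: "\<And>i. continuous_on S (\<lambda>X. rs X i)" unfolding rs_def by (intro continuous_on_sum continuous_on_component continuous_on_id)
  have csc: "\<And>j. continuous_on S (\<lambda>X. cs X j)" unfolding cs_def by (intro continuous_on_sum continuous_on_component continuous_on_id)
  have pa: "\<And>i. continuous_on S (\<lambda>X. phi (a$i) (rs X i))"
    using apos by (intro continuous_on_compose2[OF phi_cont rsc]) (auto simp: S_def rs_nonneg)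
  have pb: "\<And>j. continuous_on S (\<lambda>X. phi (b$j) (cs X j))"
    using bpos by (intro continuous_on_compose2[OF phi_cont csc]) (auto simp: S_def cs_nonneg)
  have cont: "continuous_on S (UOT_obj C \<tau> a b)"
    unfolding obj_eq[abs_def] frob_def using pa pb by (intro continuous_on_add continuous_on_mult continuous_on_const continuous_on_sum continuous_on_component continuous_on_id)
  obtain X where X: "X \<in> S" "\<forall>Y\<in>S. UOT_obj C \<tau> a b X \<le> UOT_obj C \<tau> a b Y"
    using continuous_attains_inf[OF comp _ cont] zS by blast
  show ?thesis
  proof (intro exI conjI allI impI)
    show "nonneg_mat X" using X unfolding S_def by simp
  next
    fix Y :: "real^'n^'n" assume Y: "nonneg_mat Y"
    show "UOT_obj C \<tau> a b X \<le> UOT_obj C \<tau> a b Y"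
    proof (cases "Y \<in> S")
      case True then show ?thesis using X by blast
    next
      case False
      hence "tot Y > exp 1" using Y unfolding S_def by auto
      hence "2 * \<tau> * (tot Y + 1 - exp 1) > 2 * \<tau>" using tau by simp
      hence "UOT_obj C \<tau> a b Y > UOT_obj C \<tau> a b 0"
        using obj_lower[OF tau apos bpos sa sb Cnn Y] obj_zero[OF sa sb] by simp
      moreover have "UOT_obj C \<tau> a b X \<le> UOT_obj C \<tau> a b 0" using X zS by blast
      ultimately show ?thesis by simp
    qed
  qed
qed



theorem theorem2:
  fixes C :: "real^'n^'n" and a b :: "real^'n" and \<tau> :: real
  assumes "nonneg_mat C" and "\<tau> > 0"
    and "in_simplex a" and "in_simplex b"
    and "\<forall>i. a$i > 0" and "\<forall>i. b$i > 0"
  shows "\<exists>Xf. nonneg_mat Xf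
           \<and> (\<forall>Y. nonneg_mat Y \<longrightarrow> UOT_obj C \<tau> a b Xf \<le> UOT_obj C \<tau> a b Y)
           \<and> l1 (Xf *v ones - a) + l1 (transpose Xf *v ones - b)
               \<le> 2 * real CARD('n) * max_norm C / \<tau>"
proof -
  note Cnn = assms(1) and tau = assms(2) and sa = assms(3) and sb = assms(4)
    and apos = assms(5) and bpos = assms(6)
  obtain X where Xnn: "nonneg_mat X" and opt: "\<forall>Y. nonneg_mat Y \<longrightarrow> UOT_obj C \<tau> a b X \<le> UOT_obj C \<tau> a b Y"
    using exists_min[OF tau apos bpos sa sb Cnn] by blast
  define r where "r = rs X"
  define c where "c = cs X"
  define u where "u = (\<lambda>i. ln (r i / a$i))"
  define v where "v = (\<lambda>j. ln (c j / b$j))"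
  define K where "K = max_norm C / \<tau>"
  define m where "m = (\<Sum>i\<in>UNIV. r i)"
  have rp: "\<And>i. r i > 0" unfolding r_def using rpos[OF tau apos bpos Xnn opt] .
  have cp: "\<And>j. c j > 0" unfolding c_def using cpos[OF tau apos bpos Xnn opt] .
  have p3: "\<And>i j. 0 \<le> C$i$j + \<tau> * u i + \<tau> * v j"
    unfolding u_def v_def r_def c_def using P3[OF tau apos bpos Xnn opt] .
  have p4: "\<And>i j. X$i$j > 0 \<Longrightarrow> C$i$j + \<tau> * u i + \<tau> * v j \<le> 0"
    unfolding u_def v_def r_def c_def using P4[OF tau apos bpos Xnn opt] .
  have Cle: "\<And>i j. C$i$j \<le> max_norm C" by (rule order_trans[OF abs_ge_self max_norm_ge])
  have mn: "0 \<le> max_norm C" by (rule order_trans[OF abs_ge_zero max_norm_ge])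
  have K0: "K \<ge> 0" unfolding K_def using mn tau by simp
  have uv: "\<And>i j. u i + v j \<ge> - K"
  proof -
    fix i j
    have "C$i$j / \<tau> \<le> K" unfolding K_def using Cle tau by (simp add: divide_right_mono)
    moreover have "0 \<le> C$i$j / \<tau> + u i + v j" using p3[of i j] tau by (simp add: field_simps)
    ultimately show "u i + v j \<ge> - K" by simp
  qed
  have "Min (range v) \<in> range v" by (rule Min_in) auto
  then obtain j0 where j0': "Min (range v) = v j0" by blast
  hence j0: "v j0 = Min (range v)" by simp
  have vmin: "\<And>j. v j0 \<le> v j" unfolding j0 by simp
  define s where "s = - v j0"
  have ulow: "\<And>i. u i \<ge> s - K"
  proof -
    fix i show "u i \<ge> s - K" using uv[of i j0] unfolding s_def by linarith
  qed
  have vlow: "\<And>j. v j \<ge> - s"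
  proof -
    fix j show "v j \<ge> - s" using vmin[of j] unfolding s_def by linarith
  qed
  have req: "\<And>i. r i = a$i * exp (u i)"
  proof -
    fix i have "exp (u i) = r i / a$i" unfolding u_def using rp[of i] apos by simp
    thus "r i = a$i * exp (u i)" using apos by (simp add: less_imp_neq[symmetric])
  qed
  have ceq: "\<And>j. c j = b$j * exp (v j)"
  proof -
    fix j have "exp (v j) = c j / b$j" unfolding v_def using cp[of j] bpos by simp
    thus "c j = b$j * exp (v j)" using bpos by (simp add: less_imp_neq[symmetric])
  qed
  have rlow: "\<And>i. r i \<ge> a$i * exp (s - K)"
    unfolding req using ulow apos by (intro mult_left_mono) (auto simp: less_imp_le)
  have clow: "\<And>j. c j \<ge> b$j * exp (- s)"
    unfolding ceq using vlow bpos by (intro mult_left_mono) (auto simp: less_imp_le)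
  have suma: "(\<Sum>i\<in>UNIV. a$i) = 1" using sa unfolding in_simplex_def by simp
  have sumb: "(\<Sum>i\<in>UNIV. b$i) = 1" using sb unfolding in_simplex_def by simp
  have mc: "(\<Sum>j\<in>UNIV. c j) = m" unfolding c_def m_def r_def using tot_cs unfolding tot_def .
  have slack: "(\<Sum>i\<in>UNIV. \<Sum>j\<in>UNIV. X$i$j * (C$i$j + \<tau> * u i + \<tau> * v j)) = 0"
  proof (intro sum.neutral ballI)
    fix i j
    show "X$i$j * (C$i$j + \<tau> * u i + \<tau> * v j) = 0"
    proof (cases "X$i$j > 0")
      case True then show ?thesis using p3[of i j] p4[of i j] by simp
    next
      case False then have "X$i$j = 0" using Xnn unfolding nonneg_mat_def by (metis order_le_less)
      then show ?thesis by simp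
    qed
  qed
  have expand: "(\<Sum>i\<in>UNIV. \<Sum>j\<in>UNIV. X$i$j * (C$i$j + \<tau> * u i + \<tau> * v j))
      = frob C X + \<tau> * (\<Sum>i\<in>UNIV. r i * u i) + \<tau> * (\<Sum>j\<in>UNIV. c j * v j)"
  proof -
    have "(\<Sum>i\<in>UNIV. \<Sum>j\<in>UNIV. X$i$j * (C$i$j + \<tau> * u i + \<tau> * v j))
       = (\<Sum>i\<in>UNIV. \<Sum>j\<in>UNIV. C$i$j * X$i$j) + (\<Sum>i\<in>UNIV. \<Sum>j\<in>UNIV. \<tau> * u i * X$i$j)
         + (\<Sum>i\<in>UNIV. \<Sum>j\<in>UNIV. \<tau> * v j * X$i$j)"
      by (simp add: sum.distrib algebra_simps)
    also have "(\<Sum>i\<in>UNIV. \<Sum>j\<in>UNIV. \<tau> * u i * X$i$j) = \<tau> * (\<Sum>i\<in>UNIV. r i * u i)"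
      unfolding r_def rs_def by (simp add: sum_distrib_left sum_distrib_right algebra_simps)
    also have "(\<Sum>i\<in>UNIV. \<Sum>j\<in>UNIV. \<tau> * v j * X$i$j) = (\<Sum>j\<in>UNIV. \<Sum>i\<in>UNIV. \<tau> * v j * X$i$j)"
      by (rule sum.swap)
    also have "\<dots> = \<tau> * (\<Sum>j\<in>UNIV. c j * v j)"
      unfolding c_def cs_def by (simp add: sum_distrib_left sum_distrib_right algebra_simps)
    finally show ?thesis unfolding frob_def .
  qed
  have frob0: "frob C X \<ge> 0" using Cnn Xnn unfolding frob_def nonneg_mat_def by (intro sum_nonneg) auto
  have ru: "\<And>i. r i * u i \<ge> r i - a$i"
  proof -
    fix i
    have "ln (a$i / r i) \<le> a$i / r i - 1" using ln_le_minus_one rp[of i] apos by simp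
    moreover have "u i = - ln (a$i / r i)" unfolding u_def using rp[of i] apos by (simp add: ln_div)
    ultimately have "u i \<ge> 1 - a$i / r i" by simp
    hence "r i * u i \<ge> r i * (1 - a$i / r i)" using rp[of i] by (simp add: mult_left_mono)
    moreover have "r i * (1 - a$i / r i) = r i - a$i" using rp[of i] by (simp add: right_diff_distrib)
    ultimately show "r i * u i \<ge> r i - a$i" by simp
  qed
  have cv: "\<And>j. c j * v j \<ge> c j - b$j"
  proof -
    fix j
    have "ln (b$j / c j) \<le> b$j / c j - 1" using ln_le_minus_one cp[of j] bpos by simp
    moreover have "v j = - ln (b$j / c j)" unfolding v_def using cp[of j] bpos by (simp add: ln_div)
    ultimately have "v j \<ge> 1 - b$j / c j" by simp
    hence "c j * v j \<ge> c j * (1 - b$j / c j)" using cp[of j] by (simp add: mult_left_mono)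
    moreover have "c j * (1 - b$j / c j) = c j - b$j" using cp[of j] by (simp add: right_diff_distrib)
    ultimately show "c j * v j \<ge> c j - b$j" by simp
  qed
  have s1: "(\<Sum>i\<in>UNIV. r i * u i) \<ge> m - 1"
  proof -
    have "(\<Sum>i\<in>UNIV. r i * u i) \<ge> (\<Sum>i\<in>UNIV. r i - a$i)" by (intro sum_mono ru)
    thus ?thesis unfolding m_def using suma by (simp add: sum_subtractf)
  qed
  have s2: "(\<Sum>j\<in>UNIV. c j * v j) \<ge> m - 1"
  proof -
    have "(\<Sum>j\<in>UNIV. c j * v j) \<ge> (\<Sum>j\<in>UNIV. c j - b$j)" by (intro sum_mono cv)
    thus ?thesis using mc sumb by (simp add: sum_subtractf)
  qed
  have "\<tau> * ((\<Sum>i\<in>UNIV. r i * u i) + (\<Sum>j\<in>UNIV. c j * v j)) \<le> 0"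
    using slack expand frob0 by (simp add: algebra_simps)
  hence "(\<Sum>i\<in>UNIV. r i * u i) + (\<Sum>j\<in>UNIV. c j * v j) \<le> 0" using tau by (simp add: mult_le_0_iff)
  hence m1: "m \<le> 1" using s1 s2 by simp
  have mlow1: "m \<ge> exp (s - K)"
  proof -
    have "m \<ge> (\<Sum>i\<in>UNIV. a$i * exp (s - K))" unfolding m_def by (intro sum_mono rlow)
    thus ?thesis using suma by (simp add: sum_distrib_right[symmetric])
  qed
  have mlow2: "m \<ge> exp (- s)"
  proof -
    have "m \<ge> (\<Sum>j\<in>UNIV. b$j * exp (- s))" unfolding mc[symmetric] by (intro sum_mono clow)
    thus ?thesis using sumb by (simp add: sum_distrib_right[symmetric])
  qed
  have "exp (s - K) \<le> 1" using mlow1 m1 by linarith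
  hence sK: "s \<le> K" using exp_le_cancel_iff[of "s-K" 0] by simp
  have "exp (- s) \<le> 1" using mlow2 m1 by linarith
  hence s0: "s \<ge> 0" using exp_le_cancel_iff[of "-s" 0] by simp
  have row: "\<And>i. \<bar>r i - a$i\<bar> \<le> 2 * a$i * (K - s) + (r i - a$i)"
  proof -
    fix i
    have "1 + (s - K) \<le> exp (s - K)" by (rule exp_ge_add_one_self)
    hence "a$i * (1 + (s - K)) \<le> a$i * exp (s - K)" using apos by (simp add: mult_left_mono less_imp_le)
    hence "a$i - r i \<le> a$i * (K - s)" using rlow[of i] by (simp add: algebra_simps)
    moreover have "0 \<le> a$i * (K - s)" using apos sK by (simp add: less_imp_le)
    ultimately show "\<bar>r i - a$i\<bar> \<le> 2 * a$i * (K - s) + (r i - a$i)" by (simp add: abs_if)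
  qed
  have col: "\<And>j. \<bar>c j - b$j\<bar> \<le> 2 * b$j * s + (c j - b$j)"
  proof -
    fix j
    have "1 + (- s) \<le> exp (- s)" by (rule exp_ge_add_one_self)
    hence "b$j * (1 + (- s)) \<le> b$j * exp (- s)" using bpos by (simp add: mult_left_mono less_imp_le)
    hence "b$j - c j \<le> b$j * s" using clow[of j] by (simp add: algebra_simps)
    moreover have "0 \<le> b$j * s" using bpos s0 by (simp add: less_imp_le)
    ultimately show "\<bar>c j - b$j\<bar> \<le> 2 * b$j * s + (c j - b$j)" by (simp add: abs_if mult.commute)
  qed
  have l1r: "l1 (X *v ones - a) \<le> 2 * (K - s) + (m - 1)"
  proof -
    have "l1 (X *v ones - a) = (\<Sum>i\<in>UNIV. \<bar>r i - a$i\<bar>)" unfolding l1_def r_def by (simp add: rowsum)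
    also have "\<dots> \<le> (\<Sum>i\<in>UNIV. 2 * a$i * (K - s) + (r i - a$i))" by (intro sum_mono row)
    also have "\<dots> = 2 * (K - s) + (m - 1)" unfolding m_def using suma
      by (simp add: sum.distrib sum_subtractf sum_distrib_right[symmetric] sum_distrib_left[symmetric])
    finally show ?thesis .
  qed
  have l1c: "l1 (transpose X *v ones - b) \<le> 2 * s + (m - 1)"
  proof -
    have "l1 (transpose X *v ones - b) = (\<Sum>j\<in>UNIV. \<bar>c j - b$j\<bar>)" unfolding l1_def c_def vector_minus_component colsum ..
    also have "\<dots> \<le> (\<Sum>j\<in>UNIV. 2 * b$j * s + (c j - b$j))" by (intro sum_mono col)
    also have "\<dots> = 2 * s + (m - 1)" using mc sumb
      by (simp add: sum.distrib sum_subtractf sum_distrib_right[symmetric] sum_distrib_left[symmetric])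
    finally show ?thesis .
  qed
  have n1: "real CARD('n) \<ge> 1" by simp
  have "l1 (X *v ones - a) + l1 (transpose X *v ones - b) \<le> 2 * K" using l1r l1c m1 by simp
  also have "\<dots> \<le> 2 * real CARD('n) * K" using n1 K0 by (simp add: mult_right_mono)
  also have "\<dots> = 2 * real CARD('n) * max_norm C / \<tau>" unfolding K_def by simp
  finally show ?thesis using Xnn opt by blast
qed

end
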